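(* Let $f:M^{n}\to\mathbb{R}^{n+p}$, $n\ge 2$, $p\ge 2$, be an umbilic-free isometric immersion with flat normal bundle and semi-parallel Moebius second fundamental form. If $f$ has $n$ distinct principal normal vector fields, then the Moebius metric of $f$ has vanishing sectional curvature (i.e. $f$ has vanishing Moebius curvature).
   Context: Let $f:M^n\to\mathbb{R}^{m}$ be an isometric immersion of a Riemannian manifold $(M^n,\langle\cdot,\cdot\rangle)$ with second fundamental form $\alpha$, mean curvature vector $\mathcal H=\frac1n\operatorname{tr}\alpha$ and normal connection $\nabla^\perp$ with curvature $R^\perp$. Put $\rho^2=\frac{n}{n-1}(\|\alpha\|^2-n\|\mathcal H\|^2)$; $f$ is umbilic-free if $\rho>0$ everywhere. The Moebius metric is $\langle\cdot,\cdot\rangle^*=\rho^2\langle\cdot,\cdot\rangle$, with Levi-Civita connection $\nabla^*$ and curvature $R^*$; the Moebius second fundamental form is $\beta=\rho(\alpha-\mathcal H\langle\cdot,\cdot\rangle)$. $f$ has semi-parallel Moebius second fundamental form if $R^\perp(X,Y)\beta(Z,W)-\beta(R^*(X,Y)Z,W)-\beta(Z,R^*(X,Y)W)=0$ for all tangent $X,Y,Z,W$. $f$ has flat normal bundle if $R^\perp=0$; then there are pairwise distinct normal vector fields $\eta_1,\dots,\eta_k$ (principal normal vector fields) and an orthogonal decomposition $TM=E_{\eta_1}\oplus\cdots\oplus E_{\eta_k}$ with $\alpha(X,Y)=\langle X,Y\rangle\eta_i$ for $X\in E_{\eta_i}$, $Y\in TM$. Having $n$ distinct principal normals means $k=n$,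 each $E_{\eta_i}$ being a line field. *)

theory Defs
  imports "HOL-Analysis.Analysis"
begin

text \<open>Local (coordinate) setting: M is an open set U of R^n with the metric induced
by the immersion f : U -> R^(n+p). Tangent vectors at x are coordinate vectors X :: real^'n
(X = sum_i X_i d_i).\<close>

definition pd :: "'n::finite \<Rightarrow> (real^'n \<Rightarrow> 'b::real_normed_vector) \<Rightarrow> real^'n \<Rightarrow> 'b" where
  "pd i F x = frechet_derivative F (at x) (axis i 1)"

primrec dpart :: "'n::finite list \<Rightarrow> (real^'n \<Rightarrow> 'b::real_normed_vector) \<Rightarrow> real^'n \<Rightarrow> 'b" where
  "dpart [] F = F"
| "dpart (i # is) F = pd i (dpart is F)"

definition smooth_on :: "(real^'n::finite) set \<Rightarrow> (real^'n \<Rightarrow> 'b::real_normed_vector) \<Rightarrow> bool" where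
  "smooth_on U F \<longleftrightarrow> (\<forall>is. dpart is F differentiable_on U)"

definition immersion_on :: "(real^'n::finite) set \<Rightarrow> (real^'n \<Rightarrow> real^'m::finite) \<Rightarrow> bool" where
  "immersion_on U f \<longleftrightarrow> open U \<and> smooth_on U f \<and>
     (\<forall>x\<in>U. inj (\<lambda>i. pd i f x) \<and> independent (range (\<lambda>i. pd i f x)))"

definition gmat :: "(real^'n::finite \<Rightarrow> real^'m::finite) \<Rightarrow> real^'n \<Rightarrow> real^'n^'n" where
  "gmat f x = (\<chi> i j. pd i f x \<bullet> pd j f x)"

definition ginv :: "(real^'n::finite \<Rightarrow> real^'m::finite) \<Rightarrow> real^'n \<Rightarrow> real^'n^'n" where
  "ginv f x = matrix_inv (gmat f x)"

definition ip :: "(real^'n::finite \<Rightarrow> real^'m::finite) \<Rightarrow> real^'n \<Rightarrow> real^'n \<Rightarrow> real^'n \<Rightarrow> real" where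
  "ip f x X Y = (\<Sum>i\<in>UNIV. \<Sum>j\<in>UNIV. X$i * Y$j * gmat f x $ i $ j)"

definition tproj :: "(real^'n::finite \<Rightarrow> real^'m::finite) \<Rightarrow> real^'n \<Rightarrow> real^'m \<Rightarrow> real^'m" where
  "tproj f x v = (\<Sum>i\<in>UNIV. \<Sum>j\<in>UNIV. (ginv f x $ i $ j * (v \<bullet> pd j f x)) *\<^sub>R pd i f x)"

definition nproj :: "(real^'n::finite \<Rightarrow> real^'m::finite) \<Rightarrow> real^'n \<Rightarrow> real^'m \<Rightarrow> real^'m" where
  "nproj f x v = v - tproj f x v"

definition sff :: "(real^'n::finite \<Rightarrow> real^'m::finite) \<Rightarrow> real^'n \<Rightarrow> real^'n \<Rightarrow> real^'n \<Rightarrow> real^'m" where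
  "sff f x X Y = nproj f x (\<Sum>i\<in>UNIV. \<Sum>j\<in>UNIV. (X$i * Y$j) *\<^sub>R pd i (pd j f) x)"

definition meanc :: "(real^'n::finite \<Rightarrow> real^'m::finite) \<Rightarrow> real^'n \<Rightarrow> real^'m" where
  "meanc f x = (1 / real CARD('n)) *\<^sub>R
     (\<Sum>i\<in>UNIV. \<Sum>j\<in>UNIV. ginv f x $ i $ j *\<^sub>R sff f x (axis i 1) (axis j 1))"

definition sffnorm2 :: "(real^'n::finite \<Rightarrow> real^'m::finite) \<Rightarrow> real^'n \<Rightarrow> real" where
  "sffnorm2 f x = (\<Sum>i\<in>UNIV. \<Sum>j\<in>UNIV. \<Sum>k\<in>UNIV. \<Sum>l\<in>UNIV.
      ginv f x $ i $ k * ginv f x $ j $ l *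
      (sff f x (axis i 1) (axis j 1) \<bullet> sff f x (axis k 1) (axis l 1)))"

definition rho :: "(real^'n::finite \<Rightarrow> real^'m::finite) \<Rightarrow> real^'n \<Rightarrow> real" where
  "rho f x = sqrt (real CARD('n) / (real CARD('n) - 1) *
      (sffnorm2 f x - real CARD('n) * (norm (meanc f x))\<^sup>2))"

definition umbilic_free :: "(real^'n::finite) set \<Rightarrow> (real^'n \<Rightarrow> real^'m::finite) \<Rightarrow> bool" where
  "umbilic_free U f \<longleftrightarrow> (\<forall>x\<in>U. rho f x > 0)"

definition mgmat :: "(real^'n::finite \<Rightarrow> real^'m::finite) \<Rightarrow> real^'n \<Rightarrow> real^'n^'n" where
  "mgmat f x = (\<chi> i j. (rho f x)\<^sup>2 * gmat f x $ i $ j)"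

definition mginv :: "(real^'n::finite \<Rightarrow> real^'m::finite) \<Rightarrow> real^'n \<Rightarrow> real^'n^'n" where
  "mginv f x = matrix_inv (mgmat f x)"

definition mip :: "(real^'n::finite \<Rightarrow> real^'m::finite) \<Rightarrow> real^'n \<Rightarrow> real^'n \<Rightarrow> real^'n \<Rightarrow> real" where
  "mip f x X Y = (\<Sum>i\<in>UNIV. \<Sum>j\<in>UNIV. X$i * Y$j * mgmat f x $ i $ j)"

definition christ :: "(real^'n::finite \<Rightarrow> real^'m::finite) \<Rightarrow> 'n \<Rightarrow> 'n \<Rightarrow> 'n \<Rightarrow> real^'n \<Rightarrow> real" where
  "christ f l i j x = 1/2 * (\<Sum>k\<in>UNIV. mginv f x $ l $ k *
      (pd i (\<lambda>y. mgmat f y $ j $ k) x + pd j (\<lambda>y. mgmat f y $ i $ k) x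
       - pd k (\<lambda>y. mgmat f y $ i $ j) x))"

text \<open>R(d_i,d_j)d_k = nabla_i nabla_j d_k - nabla_j nabla_i d_k = sum_l riem l i j k d_l.\<close>
definition riem :: "(real^'n::finite \<Rightarrow> real^'m::finite) \<Rightarrow> 'n \<Rightarrow> 'n \<Rightarrow> 'n \<Rightarrow> 'n \<Rightarrow> real^'n \<Rightarrow> real" where
  "riem f l i j k x = pd i (christ f l j k) x - pd j (christ f l i k) x
     + (\<Sum>m\<in>UNIV. christ f l i m x * christ f m j k x - christ f l j m x * christ f m i k x)"

definition mcurv :: "(real^'n::finite \<Rightarrow> real^'m::finite) \<Rightarrow> real^'n \<Rightarrow> real^'n \<Rightarrow> real^'n \<Rightarrow> real^'n \<Rightarrow> real^'n" where
  "mcurv f x X Y Z = (\<chi> l. \<Sum>i\<in>UNIV. \<Sum>j\<in>UNIV. \<Sum>k\<in>UNIV. X$i * Y$j * Z$k * riem f l i j k x)"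

definition msec :: "(real^'n::finite \<Rightarrow> real^'m::finite) \<Rightarrow> real^'n \<Rightarrow> real^'n \<Rightarrow> real^'n \<Rightarrow> real" where
  "msec f x X Y = mip f x (mcurv f x X Y Y) X /
      (mip f x X X * mip f x Y Y - (mip f x X Y)\<^sup>2)"

definition mbeta :: "(real^'n::finite \<Rightarrow> real^'m::finite) \<Rightarrow> real^'n \<Rightarrow> real^'n \<Rightarrow> real^'n \<Rightarrow> real^'m" where
  "mbeta f x X Y = rho f x *\<^sub>R (sff f x X Y - ip f x X Y *\<^sub>R meanc f x)"

definition nconn :: "(real^'n::finite \<Rightarrow> real^'m::finite) \<Rightarrow> 'n \<Rightarrow> (real^'n \<Rightarrow> real^'m) \<Rightarrow> real^'n \<Rightarrow> real^'m" where
  "nconn f i xi x = nproj f x (pd i xi x)"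

definition rperp :: "(real^'n::finite \<Rightarrow> real^'m::finite) \<Rightarrow> real^'n \<Rightarrow> real^'n \<Rightarrow> real^'n \<Rightarrow> (real^'n \<Rightarrow> real^'m) \<Rightarrow> real^'m" where
  "rperp f x X Y xi = (\<Sum>i\<in>UNIV. \<Sum>j\<in>UNIV. (X$i * Y$j) *\<^sub>R
      (nconn f i (nconn f j xi) x - nconn f j (nconn f i xi) x))"

definition flat_normal_bundle :: "(real^'n::finite) set \<Rightarrow> (real^'n \<Rightarrow> real^'m::finite) \<Rightarrow> bool" where
  "flat_normal_bundle U f \<longleftrightarrow>
     (\<forall>xi. smooth_on U xi \<and> (\<forall>x\<in>U. nproj f x (xi x) = xi x) \<longrightarrow>
        (\<forall>x\<in>U. \<forall>X Y. rperp f x X Y xi = 0))"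

definition semi_parallel_moebius :: "(real^'n::finite) set \<Rightarrow> (real^'n \<Rightarrow> real^'m::finite) \<Rightarrow> bool" where
  "semi_parallel_moebius U f \<longleftrightarrow>
     (\<forall>x\<in>U. \<forall>X Y Z W. rperp f x X Y (\<lambda>y. mbeta f y Z W)
        - mbeta f x (mcurv f x X Y Z) W - mbeta f x Z (mcurv f x X Y W) = 0)"

text \<open>n pairwise distinct principal normal vector fields eta_i, each E_(eta_i) a line,
  TM = E_1 (+) ... (+) E_n orthogonal, alpha(X,Y) = <X,Y> eta_i for X in E_i.\<close>
definition n_distinct_principal_normals :: "(real^'n::finite) set \<Rightarrow> (real^'n \<Rightarrow> real^'m::finite) \<Rightarrow> bool" where
  "n_distinct_principal_normals U f \<longleftrightarrow>
     (\<exists>eta :: 'n \<Rightarrow> real^'n \<Rightarrow> real^'m.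
        (\<forall>i. smooth_on U (eta i)) \<and>
        (\<forall>x\<in>U. \<forall>i j. i \<noteq> j \<longrightarrow> eta i x \<noteq> eta j x) \<and>
        (\<forall>x\<in>U. \<exists>e :: 'n \<Rightarrow> real^'n.
           (\<forall>i. e i \<noteq> 0) \<and> (\<forall>i j. i \<noteq> j \<longrightarrow> ip f x (e i) (e j) = 0) \<and>
           (\<forall>i Y. sff f x (e i) Y = ip f x (e i) Y *\<^sub>R eta i x)))"

end

theory Submission
  imports Defs
begin

lemma pd_cong:
  assumes "open U" "x \<in> U" "\<And>y. y \<in> U \<Longrightarrow> F y = G y"
  shows "pd i F x = pd i G x"
proof -
  have "\<And>D. (F has_derivative D) (at x) \<longleftrightarrow> (G has_derivative D) (at x)"
    using has_derivative_transform_within_open[OF _ assms(1,2), of F _ UNIV G]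
      has_derivative_transform_within_open[OF _ assms(1,2), of G _ UNIV F] assms(3)
    by auto
  then show ?thesis unfolding pd_def frechet_derivative_def by simp
qed

lemma pd_has:
  assumes "F differentiable at x"
  shows "(F has_derivative frechet_derivative F (at x)) (at x)"
  using assms frechet_derivative_works by blast

lemma pd_eq:
  assumes "(F has_derivative D) (at x)"
  shows "pd i F x = D (axis i 1)"
  using frechet_derivative_at[OF assms] unfolding pd_def by simp

lemma pd_bilinear:
  fixes prod :: "'a::real_normed_vector \<Rightarrow> 'b::real_normed_vector \<Rightarrow> 'c::real_normed_vector"
    and F :: "real^'n::finite \<Rightarrow> 'a" and G :: "real^'n \<Rightarrow> 'b"
  assumes "bounded_bilinear prod" "F differentiable at x" "G differentiable at x"
  shows "pd i (\<lambda>y. prod (F y) (G y)) x = prod (pd i F x) (G x) + prod (F x) (pd i G x)"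
proof -
  have "((\<lambda>y. prod (F y) (G y)) has_derivative
     (\<lambda>h. prod (F x) (frechet_derivative G (at x) h) + prod (frechet_derivative F (at x) h) (G x))) (at x)"
    using bounded_bilinear.FDERIV[OF assms(1) pd_has[OF assms(2)] pd_has[OF assms(3)]] by simp
  from pd_eq[OF this] show ?thesis unfolding pd_def by simp
qed

lemma pd_linear:
  fixes L :: "'a::real_normed_vector \<Rightarrow> 'b::real_normed_vector"
    and F :: "real^'n::finite \<Rightarrow> 'a"
  assumes "bounded_linear L" "F differentiable at x"
  shows "pd i (\<lambda>y. L (F y)) x = L (pd i F x)"
proof -
  have "((\<lambda>y. L (F y)) has_derivative (\<lambda>h. L (frechet_derivative F (at x) h))) (at x)"
    using bounded_linear.has_derivative[OF assms(1) pd_has[OF assms(2)]] by simp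
  from pd_eq[OF this] show ?thesis unfolding pd_def by simp
qed

lemma pd_add:
  assumes "F differentiable at x" "G differentiable at x"
  shows "pd i (\<lambda>y. F y + G y) x = pd i F x + pd i G x"
proof -
  have "((\<lambda>y. F y + G y) has_derivative
     (\<lambda>h. frechet_derivative F (at x) h + frechet_derivative G (at x) h)) (at x)"
    using has_derivative_add[OF pd_has[OF assms(1)] pd_has[OF assms(2)]] by simp
  from pd_eq[OF this] show ?thesis unfolding pd_def by simp
qed

lemma pd_const:
  fixes x :: "real^'n::finite" and c :: "'b::real_normed_vector"
  shows "pd i (\<lambda>y. c) x = 0"
proof -
  have "((\<lambda>y::real^'n. c) has_derivative (\<lambda>h. 0)) (at x)" by simp
  from pd_eq[OF this] show ?thesis by simp
qed

lemma pd_compose_real: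
  assumes "(h has_real_derivative h') (at (F x))" "F differentiable at x"
  shows "pd i (\<lambda>y. h (F y :: real)) x = h' * pd i F x"
proof -
  have "((\<lambda>y. h (F y)) has_derivative (\<lambda>v. h' * frechet_derivative F (at x) v)) (at x)"
    using has_derivative_compose[OF pd_has[OF assms(2)] assms(1)[unfolded has_field_derivative_def]]
    by (simp add: o_def)
  from pd_eq[OF this] show ?thesis unfolding pd_def by simp
qed

lemma don_iff: "open U \<Longrightarrow> F differentiable_on U \<longleftrightarrow> (\<forall>x\<in>U. F differentiable at x)"
  by (simp add: differentiable_on_eq_differentiable_at)

lemma diff_at_cong:
  assumes "open U" "x \<in> U" "\<And>y. y \<in> U \<Longrightarrow> F y = G y" "F differentiable at x"
  shows "G differentiable at x"
  using assms has_derivative_transform_within_open[OF _ assms(1,2), of F _ UNIV G]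
  unfolding differentiable_def by blast

lemma don_cong:
  assumes "open U" "\<And>y. y \<in> U \<Longrightarrow> F y = G y" "F differentiable_on U"
  shows "G differentiable_on U"
  using assms diff_at_cong[OF assms(1) _ assms(2)] by (auto simp: don_iff)

lemma diff_bilinear:
  fixes prod :: "'a::real_normed_vector \<Rightarrow> 'b::real_normed_vector \<Rightarrow> 'c::real_normed_vector"
    and F :: "real^'n::finite \<Rightarrow> 'a" and G :: "real^'n \<Rightarrow> 'b"
  assumes "bounded_bilinear prod" "F differentiable at x" "G differentiable at x"
  shows "(\<lambda>y. prod (F y) (G y)) differentiable at x"
  using bounded_bilinear.FDERIV[OF assms(1) pd_has[OF assms(2)] pd_has[OF assms(3)]]
  unfolding differentiable_def by blast

lemma diff_linear:
  fixes L :: "'a::real_normed_vector \<Rightarrow> 'b::real_normed_vector"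
    and F :: "real^'n::finite \<Rightarrow> 'a"
  assumes "bounded_linear L" "F differentiable at x"
  shows "(\<lambda>y. L (F y)) differentiable at x"
  using bounded_linear.has_derivative[OF assms(1) pd_has[OF assms(2)]]
  unfolding differentiable_def by blast

fun Ck :: "(real^'n::finite) set \<Rightarrow> nat \<Rightarrow> (real^'n \<Rightarrow> 'b::real_normed_vector) \<Rightarrow> bool" where
  "Ck U 0 F = (F differentiable_on U)"
| "Ck U (Suc k) F = (F differentiable_on U \<and> (\<forall>i. Ck U k (pd i F)))"

lemma Ck_diff: "Ck U k F \<Longrightarrow> F differentiable_on U"
  by (cases k) auto

lemma Ck_SucD: "Ck U (Suc k) F \<Longrightarrow> Ck U k F"
proof (induction k arbitrary: F)
  case 0 then show ?case by simp
next
  case (Suc k) then show ?case by (metis Ck.simps(2))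
qed

lemma Ck_leD: "Ck U k F \<Longrightarrow> j \<le> k \<Longrightarrow> Ck U j F"
proof (induction k)
  case 0 then show ?case by simp
next
  case (Suc k)
  show ?case
  proof (cases "j = Suc k")
    case True then show ?thesis using Suc by simp
  next
    case False then show ?thesis using Suc.IH Suc.prems Ck_SucD[of U k F] by simp
  qed
qed

lemma Ck_cong:
  assumes "open U" "\<And>y. y \<in> U \<Longrightarrow> F y = G y" "Ck U k F"
  shows "Ck U k G"
  using assms(2,3)
proof (induction k arbitrary: F G)
  case 0 then show ?case using don_cong[OF assms(1)] by auto
next
  case (Suc k)
  have e: "pd i F y = pd i G y" if "y \<in> U" for i y using pd_cong[OF assms(1) that] Suc.prems by blast
  have "Ck U k (pd i G)" for i
    using Suc.IH[of "pd i F" "pd i G"] e Suc.prems by simp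
  then show ?case using Suc.prems don_cong[OF assms(1)] by auto
qed

lemma Ck_add:
  fixes F G :: "real^'n::finite \<Rightarrow> 'b::real_normed_vector"
  assumes "open U"
  shows "Ck U k F \<Longrightarrow> Ck U k G \<Longrightarrow> Ck U k (\<lambda>y. F y + G y)"
proof (induction k arbitrary: F G)
  case 0 then show ?case by auto
next
  case (Suc k)
  have d: "F differentiable_on U" "G differentiable_on U" using Suc by auto
  have "Ck U k (pd i (\<lambda>y. F y + G y))" for i
  proof (rule Ck_cong[OF assms])
    show "Ck U k (\<lambda>y. pd i F y + pd i G y)" using Suc by auto
    show "pd i F y + pd i G y = pd i (\<lambda>y. F y + G y) y" if "y \<in> U" for y
      using pd_add[of F y G i] d that assms by (auto simp: don_iff)
  qed
  then show ?case using d by auto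
qed

lemma Ck_bilinear:
  fixes prod :: "'a::real_normed_vector \<Rightarrow> 'b::real_normed_vector \<Rightarrow> 'c::real_normed_vector"
    and F :: "real^'n::finite \<Rightarrow> 'a" and G :: "real^'n \<Rightarrow> 'b"
  assumes "open U" "bounded_bilinear prod"
  shows "Ck U k F \<Longrightarrow> Ck U k G \<Longrightarrow> Ck U k (\<lambda>y. prod (F y) (G y))"
proof (induction k arbitrary: F G)
  case 0 then show ?case using diff_bilinear[OF assms(2), of F _ G] assms(1) by (auto simp: don_iff)
next
  case (Suc k)
  have d: "F differentiable_on U" "G differentiable_on U" using Suc by auto
  have "Ck U k (pd i (\<lambda>y. prod (F y) (G y)))" for i
  proof (rule Ck_cong[OF assms(1)])
    have "Ck U k (pd i F)" "Ck U k G" "Ck U k F" "Ck U k (pd i G)" using Suc.prems Ck_SucD by auto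
    then show "Ck U k (\<lambda>y. prod (pd i F y) (G y) + prod (F y) (pd i G y))"
      using Suc.IH Ck_add[OF assms(1)] by blast
    show "prod (pd i F y) (G y) + prod (F y) (pd i G y) = pd i (\<lambda>y. prod (F y) (G y)) y" if "y \<in> U" for y
      using pd_bilinear[OF assms(2), of F y G i] d that assms by (auto simp: don_iff)
  qed
  then show ?case using d diff_bilinear[OF assms(2), of F _ G] assms(1) by (auto simp: don_iff)
qed

lemma Ck_linear:
  fixes L :: "'a::real_normed_vector \<Rightarrow> 'b::real_normed_vector"
    and F :: "real^'n::finite \<Rightarrow> 'a"
  assumes "open U" "bounded_linear L"
  shows "Ck U k F \<Longrightarrow> Ck U k (\<lambda>y. L (F y))"
proof (induction k arbitrary: F)
  case 0 then show ?case using diff_linear[OF assms(2), of F] assms(1) by (auto simp: don_iff)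
next
  case (Suc k)
  have d: "F differentiable_on U" using Suc by auto
  have "Ck U k (pd i (\<lambda>y. L (F y)))" for i
  proof (rule Ck_cong[OF assms(1)])
    show "Ck U k (\<lambda>y. L (pd i F y))" using Suc by auto
    show "L (pd i F y) = pd i (\<lambda>y. L (F y)) y" if "y \<in> U" for y
      using pd_linear[OF assms(2), of F y i] d that assms by (auto simp: don_iff)
  qed
  then show ?case using d diff_linear[OF assms(2), of F] assms(1) by (auto simp: don_iff)
qed

lemma Ck_const:
  fixes c :: "'b::real_normed_vector"
  shows "Ck (U::(real^'n::finite) set) k (\<lambda>y. c)"
proof (induction k arbitrary: c)
  case 0 then show ?case by simp
next
  case (Suc k)
  have "pd i (\<lambda>y::real^'n. c) = (\<lambda>y. 0)" for i by (rule ext) (rule pd_const)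
  then show ?case using Suc by simp
qed

lemma Ck_compose:
  fixes H :: "nat \<Rightarrow> real \<Rightarrow> real" and F :: "real^'n::finite \<Rightarrow> real"
  assumes "open U" "open V" "\<And>j t. t \<in> V \<Longrightarrow> (H j has_real_derivative H (Suc j) t) (at t)"
    "\<And>y. y \<in> U \<Longrightarrow> F y \<in> V"
  shows "Ck U k F \<Longrightarrow> Ck U k (\<lambda>y. H j (F y))"
proof (induction k arbitrary: j)
  case 0
  have "(\<lambda>y. H j (F y)) differentiable at x" if "x \<in> U" for x
  proof -
    have "F differentiable at x" using 0 that assms(1) by (auto simp: don_iff)
    moreover have "H j differentiable at (F x)"
      using assms(3)[OF assms(4)[OF that], of j] unfolding has_field_derivative_def differentiable_def by blast
    ultimately show ?thesis using differentiable_chain_at[of F x "H j"] by (simp add: o_def)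
  qed
  then show ?case using assms(1) by (auto simp: don_iff)
next
  case (Suc k)
  have dF: "F differentiable at x" if "x \<in> U" for x using Suc.prems that assms(1) by (auto simp: don_iff)
  have d: "(\<lambda>y. H j (F y)) differentiable at x" if "x \<in> U" for x
  proof -
    have "H j differentiable at (F x)"
      using assms(3)[OF assms(4)[OF that], of j] unfolding has_field_derivative_def differentiable_def by blast
    then show ?thesis using dF[OF that] differentiable_chain_at[of F x "H j"] by (simp add: o_def)
  qed
  have "Ck U k (pd i (\<lambda>y. H j (F y)))" for i
  proof (rule Ck_cong[OF assms(1)])
    have "Ck U k (\<lambda>y. H (Suc j) (F y))" using Suc.IH Suc.prems Ck_SucD by blast
    moreover have "Ck U k (pd i F)" using Suc.prems by auto
    ultimately show "Ck U k (\<lambda>y. H (Suc j) (F y) * pd i F y)"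
      using Ck_bilinear[OF assms(1) bounded_bilinear_mult] by blast
    show "H (Suc j) (F y) * pd i F y = pd i (\<lambda>y. H j (F y)) y" if "y \<in> U" for y
      using pd_compose_real[OF assms(3)[OF assms(4)[OF that]] dF[OF that]] by simp
  qed
  then show ?case using d assms(1) by (auto simp: don_iff)
qed

definition sm :: "(real^'n::finite) set \<Rightarrow> (real^'n \<Rightarrow> 'b::real_normed_vector) \<Rightarrow> bool" where
  "sm U F \<longleftrightarrow> (\<forall>k. Ck U k F)"

lemma dpart_snoc: "dpart (is @ [i]) F = dpart is (pd i F)"
  by (induction "is") auto

lemma Ck_dpart: "Ck U k F \<longleftrightarrow> (\<forall>is. length is \<le> k \<longrightarrow> dpart is F differentiable_on U)"
proof (induction k arbitrary: F)
  case 0 then show ?case by auto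
next
  case (Suc k)
  show ?case
  proof
    assume A: "Ck U (Suc k) F"
    show "\<forall>is. length is \<le> Suc k \<longrightarrow> dpart is F differentiable_on U"
    proof (intro allI impI)
      fix "is" :: "'a list" assume "length is \<le> Suc k"
      then show "dpart is F differentiable_on U"
      proof (cases "is" rule: rev_cases)
        case Nil then show ?thesis using A by simp
      next
        case (snoc js i)
        then show ?thesis using A Suc.IH[of "pd i F"] \<open>length is \<le> Suc k\<close> by (simp add: dpart_snoc)
      qed
    qed
  next
    assume A: "\<forall>is. length is \<le> Suc k \<longrightarrow> dpart is F differentiable_on U"
    have "F differentiable_on U" using A[rule_format, of "[]"] by simp
    moreover have "Ck U k (pd i F)" for i
      unfolding Suc.IH
    proof (intro allI impI)
      fix "is" :: "'a list" assume "length is \<le> k"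
      then show "dpart is (pd i F) differentiable_on U"
        using A[rule_format, of "is @ [i]"] by (simp add: dpart_snoc)
    qed
    ultimately show "Ck U (Suc k) F" by simp
  qed
qed

lemma smooth_on_sm: "smooth_on U F \<longleftrightarrow> sm U F"
  unfolding smooth_on_def sm_def Ck_dpart by auto

lemma sm_Ck: "sm U F \<Longrightarrow> Ck U k F" by (simp add: sm_def)

lemma sm_cong: "open U \<Longrightarrow> (\<And>y. y \<in> U \<Longrightarrow> F y = G y) \<Longrightarrow> sm U F \<Longrightarrow> sm U G"
  unfolding sm_def using Ck_cong by blast

lemma sm_diff_on: "sm U F \<Longrightarrow> F differentiable_on U"
  using Ck_diff sm_def by blast

lemma sm_diff_at: "open U \<Longrightarrow> sm U F \<Longrightarrow> x \<in> U \<Longrightarrow> F differentiable at x"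
  using sm_diff_on don_iff by blast

lemma sm_pd: "sm U F \<Longrightarrow> sm U (pd i F)"
  unfolding sm_def using Ck.simps(2) by blast

lemma sm_add: "open U \<Longrightarrow> sm U F \<Longrightarrow> sm U G \<Longrightarrow> sm U (\<lambda>y. F y + G y)"
  unfolding sm_def using Ck_add by blast

lemma sm_bilinear:
  fixes prod :: "'a::real_normed_vector \<Rightarrow> 'b::real_normed_vector \<Rightarrow> 'c::real_normed_vector"
    and F :: "real^'n::finite \<Rightarrow> 'a" and G :: "real^'n \<Rightarrow> 'b"
  shows "open U \<Longrightarrow> bounded_bilinear prod \<Longrightarrow> sm U F \<Longrightarrow> sm U G \<Longrightarrow> sm U (\<lambda>y. prod (F y) (G y))"
  unfolding sm_def using Ck_bilinear by blast

lemma sm_linear: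
  fixes L :: "'a::real_normed_vector \<Rightarrow> 'b::real_normed_vector"
    and F :: "real^'n::finite \<Rightarrow> 'a"
  shows "open U \<Longrightarrow> bounded_linear L \<Longrightarrow> sm U F \<Longrightarrow> sm U (\<lambda>y. L (F y))"
  unfolding sm_def using Ck_linear by blast

lemma sm_const: "sm U (\<lambda>y. c)"
  unfolding sm_def using Ck_const by blast

lemma sm_mult: "open U \<Longrightarrow> sm U F \<Longrightarrow> sm U G \<Longrightarrow> sm U (\<lambda>y. F y * G y :: real)"
  using sm_bilinear[OF _ bounded_bilinear_mult] by blast

lemma sm_scaleR: "open U \<Longrightarrow> sm U F \<Longrightarrow> sm U G \<Longrightarrow> sm U (\<lambda>y. F y *\<^sub>R G y)"
  using sm_bilinear[OF _ bounded_bilinear_scaleR] by blast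

lemma sm_inner: "open U \<Longrightarrow> sm U F \<Longrightarrow> sm U G \<Longrightarrow> sm U (\<lambda>y. inner (F y) (G y :: real^'m::finite))"
  using sm_bilinear[OF _ bounded_bilinear_inner] by blast

lemma sm_uminus: "open U \<Longrightarrow> sm U F \<Longrightarrow> sm U (\<lambda>y. - F y)"
  using sm_linear[OF _ bounded_linear_minus[OF bounded_linear_ident]] by blast

lemma sm_minus: "open U \<Longrightarrow> sm U F \<Longrightarrow> sm U G \<Longrightarrow> sm U (\<lambda>y. F y - G y)"
  using sm_add[OF _ _ sm_uminus, of U F G] by simp

lemma sm_nth: "open U \<Longrightarrow> sm U F \<Longrightarrow> sm U (\<lambda>y. F y $ k)"
  using sm_linear[OF _ bounded_linear_vec_nth] by blast

lemma sm_sum: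
  assumes "open U" "finite S" "\<And>s. s \<in> S \<Longrightarrow> sm U (F s)"
  shows "sm U (\<lambda>y. \<Sum>s\<in>S. F s y)"
  using assms(2,3)
proof (induction S rule: finite_induct)
  case empty then show ?case using sm_const by simp
next
  case (insert s S) then show ?case using sm_add[OF assms(1), of "F s" "\<lambda>y. \<Sum>s\<in>S. F s y"] by simp
qed

lemma sm_prod:
  assumes "open U" "finite S" "\<And>s. s \<in> S \<Longrightarrow> sm U (F s)"
  shows "sm U (\<lambda>y. \<Prod>s\<in>S. F s y :: real)"
  using assms(2,3)
proof (induction S rule: finite_induct)
  case empty then show ?case using sm_const by simp
next
  case (insert s S) then show ?case using sm_mult[OF assms(1), of "F s" "\<lambda>y. \<Prod>s\<in>S. F s y"] by simp
qed

lemma sm_power: "open U \<Longrightarrow> sm U F \<Longrightarrow> sm U (\<lambda>y. F y ^ n :: real)"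
  by (induction n) (auto intro: sm_mult sm_const)

lemma sm_inverse:
  assumes "open U" "sm U F" "\<And>y. y \<in> U \<Longrightarrow> F y \<noteq> (0::real)"
  shows "sm U (\<lambda>y. inverse (F y))"
proof -
  define H where "H j t = (\<Prod>m<j. of_int (-1 - int m)) * power_int t (-1 - int j)" for j and t :: real
  have D: "(H j has_real_derivative H (Suc j) t) (at t)" if "t \<in> - {0}" for j t
  proof -
    have "((\<lambda>t. power_int t (-1 - int j)) has_real_derivative
          (of_int (-1 - int j) * power_int t (-1 - int j - 1) * 1)) (at t)"
      by (rule DERIV_power_int) (use that in auto)
    then have "(H j has_real_derivative (\<Prod>m<j. of_int (-1 - int m)) *
          (of_int (-1 - int j) * power_int t (-1 - int j - 1) * 1)) (at t)"
      unfolding H_def by (rule DERIV_cmult)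
    moreover have "(\<Prod>m<j. of_int (-1 - int m)) *
          (of_int (-1 - int j) * power_int t (-1 - int j - 1) * 1) = H (Suc j) t"
      unfolding H_def by (simp add: algebra_simps)
    ultimately show ?thesis by simp
  qed
  have "sm U (\<lambda>y. H 0 (F y))"
    unfolding sm_def
  proof
    fix k show "Ck U k (\<lambda>y. H 0 (F y))"
      by (rule Ck_compose[where V="-{0}" and H=H]) (use D assms sm_Ck in auto)
  qed
  then show ?thesis
    by (rule sm_cong[OF assms(1), rotated]) (simp add: H_def power_int_minus)
qed

lemma sm_divide: "open U \<Longrightarrow> sm U F \<Longrightarrow> sm U G \<Longrightarrow> (\<And>y. y \<in> U \<Longrightarrow> G y \<noteq> 0) \<Longrightarrow> sm U (\<lambda>y. F y / G y :: real)"
  using sm_mult[OF _ _ sm_inverse, of U F G] by (simp add: divide_inverse)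

lemma sm_sqrt:
  assumes "open U" "sm U F" "\<And>y. y \<in> U \<Longrightarrow> F y > (0::real)"
  shows "sm U (\<lambda>y. sqrt (F y))"
proof -
  define H where "H j t = (\<Prod>m<j. 1/2 - real m) * t powr (1/2 - real j)" for j and t :: real
  have D: "(H j has_real_derivative H (Suc j) t) (at t)" if "t \<in> {0<..}" for j t
  proof -
    have "(H j has_real_derivative (\<Prod>m<j. 1/2 - real m) * ((1/2 - real j) * t powr (1/2 - real j - 1))) (at t)"
      unfolding H_def by (rule DERIV_cmult, rule has_real_derivative_powr) (use that in auto)
    moreover have "(\<Prod>m<j. 1/2 - real m) * ((1/2 - real j) * t powr (1/2 - real j - 1)) = H (Suc j) t"
      unfolding H_def by (simp add: algebra_simps)
    ultimately show ?thesis by simp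
  qed
  have "sm U (\<lambda>y. H 0 (F y))"
    unfolding sm_def
  proof
    fix k show "Ck U k (\<lambda>y. H 0 (F y))"
      by (rule Ck_compose[where V="{0<..}" and H=H]) (use D assms sm_Ck in auto)
  qed
  then show ?thesis
    by (rule sm_cong[OF assms(1), rotated]) (use assms(3) in \<open>simp add: H_def powr_half_sqrt less_imp_le\<close>)
qed

lemma sm_det:
  fixes M :: "real^'n::finite \<Rightarrow> real^'k::finite^'k"
  assumes "open U" "\<And>i j. sm U (\<lambda>y. M y $ i $ j)"
  shows "sm U (\<lambda>y. det (M y))"
  unfolding det_def
proof (rule sm_sum[OF assms(1)])
  show "finite {p. p permutes (UNIV::'k set)}" by (simp add: finite_permutations)
  fix p :: "'k \<Rightarrow> 'k"
  show "sm U (\<lambda>y. of_int (sign p) * (\<Prod>i\<in>UNIV. M y $ i $ p i))"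
    by (rule sm_mult[OF assms(1) sm_const sm_prod[OF assms(1)]]) (use assms(2) in auto)
qed

lemma matrix_inv_props:
  fixes A :: "real^'k::finite^'k"
  assumes "det A \<noteq> 0"
  shows "A ** matrix_inv A = mat 1" "matrix_inv A ** A = mat 1"
proof -
  have "invertible A" using assms invertible_det_nz by blast
  then have "\<exists>A'. A ** A' = mat 1 \<and> A' ** A = mat 1" unfolding invertible_def by blast
  from someI_ex[OF this] show "A ** matrix_inv A = mat 1" "matrix_inv A ** A = mat 1"
    unfolding matrix_inv_def by auto
qed

lemma matrix_inv_entry:
  fixes A :: "real^'k::finite^'k"
  assumes "det A \<noteq> 0"
  shows "matrix_inv A $ i $ j = det (\<chi> a c. if c = i then axis j 1 $ a else A$a$c) / det A"
proof -
  have "A *v (matrix_inv A *v axis j 1) = axis j 1"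
    by (simp add: matrix_vector_mul_assoc matrix_inv_props[OF assms])
  then have "matrix_inv A *v axis j 1 = (\<chi> k. det(\<chi> a c. if c = k then axis j 1 $ a else A$a$c) / det A)"
    using cramer[OF assms] by blast
  moreover have "(matrix_inv A *v axis j 1) $ i = matrix_inv A $ i $ j"
    by (simp add: matrix_vector_mult_basis column_def)
  ultimately show ?thesis by simp
qed

lemma sm_matrix_inv:
  fixes M :: "real^'n::finite \<Rightarrow> real^'k::finite^'k"
  assumes "open U" "\<And>i j. sm U (\<lambda>y. M y $ i $ j)" "\<And>y. y \<in> U \<Longrightarrow> det (M y) \<noteq> 0"
  shows "sm U (\<lambda>y. matrix_inv (M y) $ i $ j)"
proof (rule sm_cong[OF assms(1)])
  show "det (\<chi> a c. if c = i then axis j 1 $ a else M y$a$c) / det (M y) = matrix_inv (M y) $ i $ j"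
    if "y \<in> U" for y using matrix_inv_entry[OF assms(3)[OF that]] by simp
  have "sm U (\<lambda>y. (\<chi> a c. if c = i then axis j 1 $ a else M y$a$c) $ a $ c)" for a c
    by (cases "c = i") (auto intro: sm_const assms(2))
  then show "sm U (\<lambda>y. det (\<chi> a c. if c = i then axis j 1 $ a else M y$a$c) / det (M y))"
    by (intro sm_divide[OF assms(1)] sm_det[OF assms(1)] assms(2) assms(3)) auto
qed

lemma indep_comb_zero:
  fixes p :: "'n::finite \<Rightarrow> 'v::real_vector"
  assumes "inj p" "independent (range p)" "(\<Sum>i\<in>UNIV. c i *\<^sub>R p i) = 0"
  shows "c i = 0"
proof -
  define u where "u w = c (inv p w)" for w
  have "(\<Sum>w\<in>range p. u w *\<^sub>R w) = (\<Sum>i\<in>UNIV. u (p i) *\<^sub>R p i)"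
    by (rule sum.reindex[OF assms(1), unfolded o_def])
  also have "\<dots> = 0" using assms(1,3) by (simp add: u_def)
  finally have "\<forall>w\<in>range p. u w = 0"
    using assms(2) real_vector.dependent_finite[of "range p"] by auto
  then show ?thesis using assms(1) by (auto simp: u_def)
qed

definition Pv :: "(real^'n::finite \<Rightarrow> real^'m::finite) \<Rightarrow> real^'n \<Rightarrow> real^'n \<Rightarrow> real^'m" where
  "Pv f x v = (\<Sum>i\<in>UNIV. v$i *\<^sub>R pd i f x)"

lemma ip_Pv: "ip f x X Y = inner (Pv f x X) (Pv f x Y)"
  unfolding ip_def Pv_def gmat_def inner_sum_left
  by (simp add: inner_sum_right sum_distrib_left mult.assoc mult.left_commute)

lemma gmat_sym: "gmat f x $ i $ j = gmat f x $ j $ i"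
  unfolding gmat_def by (simp add: inner_commute)

lemma ip_sym: "ip f x X Y = ip f x Y X"
  by (simp add: ip_Pv inner_commute)

lemma Pv_linear: "linear (Pv f x)"
  unfolding Pv_def by (rule linearI) (auto simp: sum.distrib scaleR_add_left scaleR_sum_right)

lemma Pv_add: "Pv f x (a + b) = Pv f x a + Pv f x b"
  using linear_add[OF Pv_linear] by blast

lemma Pv_scale: "Pv f x (c *\<^sub>R a) = c *\<^sub>R Pv f x a"
  using linear_scale[OF Pv_linear] by blast

lemma immersion_open: "immersion_on U f \<Longrightarrow> open U"
  by (simp add: immersion_on_def)

lemma immersion_sm: "immersion_on U f \<Longrightarrow> sm U f"
  by (simp add: immersion_on_def smooth_on_sm)

lemma Pv_inj:
  assumes "immersion_on U f" "x \<in> U" "Pv f x v = 0"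
  shows "v = 0"
proof -
  have "inj (\<lambda>i. pd i f x)" "independent (range (\<lambda>i. pd i f x))"
    using assms(1,2) by (auto simp: immersion_on_def)
  then have "v $ i = 0" for i
    using indep_comb_zero[of "\<lambda>i. pd i f x" "\<lambda>i. v $ i"] assms(3) unfolding Pv_def by blast
  then show ?thesis by (simp add: vec_eq_iff)
qed

lemma ip_pos:
  assumes "immersion_on U f" "x \<in> U" "v \<noteq> 0"
  shows "ip f x v v > 0"
  using Pv_inj[OF assms(1,2)] assms(3) by (auto simp: ip_Pv)

lemma gmat_det_nz:
  assumes "immersion_on U f" "x \<in> U"
  shows "det (gmat f x) \<noteq> 0"
proof -
  have "inj (\<lambda>v. gmat f x *v v)"
  proof (rule linear_injective_0[THEN iffD2])
    show "linear ((*v) (gmat f x))" by (simp add: matrix_vector_mul_linear)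
    show "\<forall>v. gmat f x *v v = 0 \<longrightarrow> v = 0"
    proof (intro allI impI)
      fix v assume "gmat f x *v v = 0"
      then have "inner v (gmat f x *v v) = 0" by simp
      moreover have "inner v (gmat f x *v v) = ip f x v v"
        unfolding ip_def inner_vec_def matrix_vector_mult_def
        by (simp add: sum_distrib_left mult.assoc mult.commute mult.left_commute)
      ultimately show "v = 0" using ip_pos[OF assms] by force
    qed
  qed
  then show ?thesis
    using det_nz_iff_inj[of "\<lambda>v. gmat f x *v v"] by (simp add: matrix_vector_mul_linear)
qed

lemmas sm_rules = sm_minus sm_add sm_sum sm_scaleR sm_mult sm_inner sm_nth sm_const finite

lemma sm_pdf: "immersion_on U f \<Longrightarrow> sm U (pd i f)"
  using immersion_sm sm_pd by blast

lemma sm_pdpdf: "immersion_on U f \<Longrightarrow> sm U (pd i (pd j f))"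
  using sm_pdf sm_pd by blast

lemma sm_gmat: "immersion_on U f \<Longrightarrow> sm U (\<lambda>y. gmat f y $ i $ j)"
  unfolding gmat_def using sm_inner[OF immersion_open sm_pdf sm_pdf] by simp

lemma sm_ginv: "immersion_on U f \<Longrightarrow> sm U (\<lambda>y. ginv f y $ i $ j)"
  unfolding ginv_def
  by (rule sm_matrix_inv[OF immersion_open sm_gmat gmat_det_nz])

lemma sm_sff: "immersion_on U f \<Longrightarrow> sm U (\<lambda>y. sff f y Z W)"
  unfolding sff_def nproj_def tproj_def
  by (intro sm_rules sm_pdf sm_pdpdf sm_ginv immersion_open) auto

lemma sm_meanc: "immersion_on U f \<Longrightarrow> sm U (\<lambda>y. meanc f y)"
  unfolding meanc_def
  by (intro sm_rules sm_sff sm_ginv immersion_open) auto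

lemma sm_sffnorm2: "immersion_on U f \<Longrightarrow> sm U (\<lambda>y. sffnorm2 f y)"
  unfolding sffnorm2_def
  by (intro sm_rules sm_sff sm_ginv immersion_open) auto

definition rho2 :: "(real^'n::finite \<Rightarrow> real^'m::finite) \<Rightarrow> real^'n \<Rightarrow> real" where
  "rho2 f x = real CARD('n) / (real CARD('n) - 1) *
      (sffnorm2 f x - real CARD('n) * inner (meanc f x) (meanc f x))"

lemma rho_rho2: "rho f x = sqrt (rho2 f x)"
  unfolding rho_def rho2_def by (simp add: power2_norm_eq_inner)

lemma sm_rho2: "immersion_on U f \<Longrightarrow> sm U (\<lambda>y. rho2 f y)"
  unfolding rho2_def
  by (intro sm_rules sm_sffnorm2 sm_meanc immersion_open) auto

lemma rho2_pos: "umbilic_free U f \<Longrightarrow> y \<in> U \<Longrightarrow> rho2 f y > 0"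
  unfolding umbilic_free_def rho_rho2 by auto

lemma rho_sq: "umbilic_free U f \<Longrightarrow> y \<in> U \<Longrightarrow> (rho f y)^2 = rho2 f y"
  using rho2_pos[of U f y] by (simp add: rho_rho2 less_imp_le)

lemma sm_rho: "immersion_on U f \<Longrightarrow> umbilic_free U f \<Longrightarrow> sm U (\<lambda>y. rho f y)"
  unfolding rho_rho2
  by (rule sm_sqrt[OF immersion_open sm_rho2 rho2_pos])

lemma sm_ip: "immersion_on U f \<Longrightarrow> sm U (\<lambda>y. ip f y Z W)"
  unfolding ip_def
  by (intro sm_rules sm_gmat immersion_open) auto

lemma sm_mbeta: "immersion_on U f \<Longrightarrow> umbilic_free U f \<Longrightarrow> sm U (\<lambda>y. mbeta f y Z W)"
  unfolding mbeta_def
  by (intro sm_rules sm_rho sm_sff sm_ip sm_meanc immersion_open)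

lemma mgmat_scale: "mgmat f x = (rho f x)^2 *\<^sub>R gmat f x"
  unfolding mgmat_def by (simp add: vec_eq_iff)

lemma sm_mgmat: "immersion_on U f \<Longrightarrow> umbilic_free U f \<Longrightarrow> sm U (\<lambda>y. mgmat f y $ i $ j)"
  unfolding mgmat_def vec_lambda_beta
  by (intro sm_rules sm_rho sm_gmat immersion_open sm_power) auto

lemma mgmat_det_nz:
  assumes "immersion_on U f" "umbilic_free U f" "x \<in> U"
  shows "det (mgmat f x) \<noteq> 0"
proof -
  have "invertible (gmat f x)" using gmat_det_nz[OF assms(1,3)] invertible_det_nz by blast
  moreover have "(rho f x)^2 \<noteq> 0" using assms(2,3) by (auto simp: umbilic_free_def)
  ultimately have "invertible (mgmat f x)" unfolding mgmat_scale using scalar_invertible by blast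
  then show ?thesis using invertible_det_nz by blast
qed

lemma sm_mginv: "immersion_on U f \<Longrightarrow> umbilic_free U f \<Longrightarrow> sm U (\<lambda>y. mginv f y $ i $ j)"
  unfolding mginv_def
  by (rule sm_matrix_inv[OF immersion_open sm_mgmat mgmat_det_nz])

lemma sm_christ: "immersion_on U f \<Longrightarrow> umbilic_free U f \<Longrightarrow> sm U (christ f l i j)"
  unfolding christ_def
  by (intro sm_rules sm_mginv sm_pd sm_mgmat immersion_open) auto

lemma schwarz_est:
  fixes F G :: "real^'n::finite \<Rightarrow> real" and a b :: "real^'n"
  assumes U: "open U" "x \<in> U"
    and dF: "\<And>y. y \<in> U \<Longrightarrow> (F has_derivative DF y) (at y)"
    and dFa: "\<And>y. y \<in> U \<Longrightarrow> DF y a = G y"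
    and dG: "(G has_derivative L) (at x)"
    and na: "norm a \<le> 1" and nb: "norm b \<le> 1" and e: "e > 0"
  shows "\<exists>\<delta>>0. \<forall>t. 0 < t \<and> t < \<delta> \<longrightarrow>
     \<bar>F (x + t *\<^sub>R a + t *\<^sub>R b) - F (x + t *\<^sub>R a) - F (x + t *\<^sub>R b) + F x - t^2 * L b\<bar> \<le> 3 * e * t^2"
proof -
  have bl: "bounded_linear L" using dG has_derivative_bounded_linear by blast
  obtain d where d: "d > 0" "\<And>y. norm (y - x) < d \<Longrightarrow> \<bar>G y - G x - L (y - x)\<bar> \<le> e * norm (y - x)"
    using dG e unfolding has_derivative_at_alt by force
  obtain r where r: "r > 0" "ball x r \<subseteq> U" using U openE by blast
  define \<delta> where "\<delta> = min d r / 2"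
  have "\<delta> > 0" using d r by (simp add: \<delta>_def)
  moreover have "\<bar>F (x + t *\<^sub>R a + t *\<^sub>R b) - F (x + t *\<^sub>R a) - F (x + t *\<^sub>R b) + F x - t^2 * L b\<bar> \<le> 3 * e * t^2"
    if t: "0 < t" "t < \<delta>" for t
  proof -
    have inU: "x + h \<in> U" "norm h < d" if "norm h \<le> 2 * t" for h
    proof -
      have "norm h < min d r" using that t by (simp add: \<delta>_def)
      then show "x + h \<in> U" "norm h < d" using r by (auto simp: dist_norm)
    qed
    have nsab: "norm (s *\<^sub>R a + t *\<^sub>R b) \<le> 2 * t" "norm (s *\<^sub>R a) \<le> 2 * t" if "0 \<le> s" "s \<le> t" for s
    proof -
      have "norm (s *\<^sub>R a) \<le> s" using na that mult_left_le[of "norm a" s] by simp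
      moreover have "norm (t *\<^sub>R b) \<le> t" using nb t mult_left_le[of "norm b" t] by simp
      ultimately show "norm (s *\<^sub>R a + t *\<^sub>R b) \<le> 2 * t" "norm (s *\<^sub>R a) \<le> 2 * t"
        using norm_triangle_ineq[of "s *\<^sub>R a" "t *\<^sub>R b"] that by linarith+
    qed
    define g where "g s = F (x + s *\<^sub>R a + t *\<^sub>R b) - F (x + s *\<^sub>R a)" for s
    have lin: "DF y (h *\<^sub>R a) = h * G y" if "y \<in> U" for y h
      using linear_scale[OF has_derivative_linear[OF dF[OF that]]] dFa[OF that] by simp
    have gder: "(g has_derivative (\<lambda>h. h * (G (x + s *\<^sub>R a + t *\<^sub>R b) - G (x + s *\<^sub>R a)))) (at s within {0..t})"
      if "0 \<le> s" "s \<le> t" for s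
    proof -
      have p1: "x + s *\<^sub>R a + t *\<^sub>R b \<in> U" using inU(1)[OF nsab(1)[OF that]] by (simp add: add.assoc)
      have p2: "x + s *\<^sub>R a \<in> U" using inU(1)[OF nsab(2)[OF that]] by simp
      have i1: "((\<lambda>s. x + s *\<^sub>R a + t *\<^sub>R b) has_derivative (\<lambda>h. h *\<^sub>R a)) (at s)"
        by (auto intro!: derivative_eq_intros)
      have i2: "((\<lambda>s. x + s *\<^sub>R a) has_derivative (\<lambda>h. h *\<^sub>R a)) (at s)"
        by (auto intro!: derivative_eq_intros)
      have "(g has_derivative (\<lambda>h. DF (x + s *\<^sub>R a + t *\<^sub>R b) (h *\<^sub>R a) - DF (x + s *\<^sub>R a) (h *\<^sub>R a))) (at s)"
        unfolding g_def
        by (rule has_derivative_diff[OF has_derivative_compose[OF i1 dF[OF p1]] has_derivative_compose[OF i2 dF[OF p2]]])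
      then have "(g has_derivative (\<lambda>h. h * (G (x + s *\<^sub>R a + t *\<^sub>R b) - G (x + s *\<^sub>R a)))) (at s)"
        by (simp add: lin[OF p1] lin[OF p2] right_diff_distrib)
      then show ?thesis by (rule has_derivative_at_withinI)
    qed
    obtain s where s: "s \<in> {0<..<t}" "g t - g 0 = (t - 0) * (G (x + s *\<^sub>R a + t *\<^sub>R b) - G (x + s *\<^sub>R a))"
      using mvt_simple[OF t(1) gder] by auto
    have s01: "0 \<le> s" "s \<le> t" using s(1) by auto
    define R1 where "R1 = G (x + s *\<^sub>R a + t *\<^sub>R b) - G x - L (s *\<^sub>R a + t *\<^sub>R b)"
    define R2 where "R2 = G (x + s *\<^sub>R a) - G x - L (s *\<^sub>R a)"
    have R1: "\<bar>R1\<bar> \<le> e * (2 * t)"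
    proof -
      have "\<bar>R1\<bar> \<le> e * norm (s *\<^sub>R a + t *\<^sub>R b)"
        using d(2)[of "x + s *\<^sub>R a + t *\<^sub>R b"] inU(2)[OF nsab(1)[OF s01]] unfolding R1_def
        by (simp add: add.assoc)
      also have "\<dots> \<le> e * (2 * t)" using nsab(1)[OF s01] e by simp
      finally show ?thesis .
    qed
    have R2: "\<bar>R2\<bar> \<le> e * t"
    proof -
      have "\<bar>R2\<bar> \<le> e * norm (s *\<^sub>R a)"
        using d(2)[of "x + s *\<^sub>R a"] inU(2)[OF nsab(2)[OF s01]] unfolding R2_def by simp
      also have "\<dots> \<le> e * t" using na s01 e mult_left_le[of "norm a" s]
        by (intro mult_left_mono) auto
      finally show ?thesis .
    qed
    have Ll: "L (s *\<^sub>R a + t *\<^sub>R b) - L (s *\<^sub>R a) = t * L b"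
      using bounded_linear.linear[OF bl] by (simp add: linear_add linear_scale)
    have "F (x + t *\<^sub>R a + t *\<^sub>R b) - F (x + t *\<^sub>R a) - F (x + t *\<^sub>R b) + F x = g t - g 0"
      by (simp add: g_def)
    also have "\<dots> = t * (t * L b + R1 - R2)"
      using s(2) Ll unfolding R1_def R2_def by (simp add: algebra_simps)
    finally have eq: "F (x + t *\<^sub>R a + t *\<^sub>R b) - F (x + t *\<^sub>R a) - F (x + t *\<^sub>R b) + F x - t^2 * L b = t * (R1 - R2)"
      by (simp add: algebra_simps power2_eq_square)
    have "\<bar>t * (R1 - R2)\<bar> \<le> t * (3 * e * t)"
      using R1 R2 t(1) by (simp add: abs_mult)
    then show ?thesis unfolding eq by (simp add: power2_eq_square algebra_simps)
  qed
  ultimately show ?thesis by blast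
qed

lemma schwarz:
  fixes F :: "real^'n::finite \<Rightarrow> real"
  assumes U: "open U" "x \<in> U" and dF: "F differentiable_on U"
    and di: "pd i F differentiable at x" and dj: "pd j F differentiable at x"
  shows "pd i (pd j F) x = pd j (pd i F) x"
proof -
  define a where "a = (axis i 1 :: real^'n)"
  define b where "b = (axis j 1 :: real^'n)"
  define Li where "Li = frechet_derivative (pd i F) (at x)"
  define Lj where "Lj = frechet_derivative (pd j F) (at x)"
  have dFy: "(F has_derivative frechet_derivative F (at y)) (at y)" if "y \<in> U" for y
    using dF U that by (auto simp: don_iff frechet_derivative_works)
  have na: "norm a \<le> 1" and nb: "norm b \<le> 1" by (simp_all add: a_def b_def)
  have goal: "pd i (pd j F) x = Lj a" "pd j (pd i F) x = Li b"
    by (simp_all add: pd_def a_def b_def Li_def Lj_def)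
  have "\<bar>Lj a - Li b\<bar> \<le> 6 * e" if e: "e > 0" for e
  proof -
    obtain d1 where d1: "d1 > 0" "\<And>t. 0 < t \<Longrightarrow> t < d1 \<Longrightarrow>
      \<bar>F (x + t *\<^sub>R a + t *\<^sub>R b) - F (x + t *\<^sub>R a) - F (x + t *\<^sub>R b) + F x - t^2 * Li b\<bar> \<le> 3 * e * t^2"
      using schwarz_est[OF U dFy _ _ na nb e, of "pd i F" Li] pd_has[OF di]
      unfolding Li_def by (force simp: pd_def a_def)
    obtain d2 where d2: "d2 > 0" "\<And>t. 0 < t \<Longrightarrow> t < d2 \<Longrightarrow>
      \<bar>F (x + t *\<^sub>R b + t *\<^sub>R a) - F (x + t *\<^sub>R b) - F (x + t *\<^sub>R a) + F x - t^2 * Lj a\<bar> \<le> 3 * e * t^2"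
      using schwarz_est[OF U dFy _ _ nb na e, of "pd j F" Lj] pd_has[OF dj]
      unfolding Lj_def by (force simp: pd_def b_def)
    define t where "t = min d1 d2 / 2"
    have t: "0 < t" "t < d1" "t < d2" using d1 d2 by (auto simp: t_def)
    have sw: "x + t *\<^sub>R b + t *\<^sub>R a = x + t *\<^sub>R a + t *\<^sub>R b" by (simp add: algebra_simps)
    have "\<bar>t^2 * Lj a - t^2 * Li b\<bar> \<le> 6 * e * t^2"
      using d1(2)[OF t(1,2)] d2(2)[OF t(1,3)] unfolding sw by linarith
    moreover have "t^2 * Lj a - t^2 * Li b = t^2 * (Lj a - Li b)" by (simp only: right_diff_distrib)
    then have "\<bar>t^2 * Lj a - t^2 * Li b\<bar> = t^2 * \<bar>Lj a - Li b\<bar>" by (simp only: abs_mult abs_power2)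
    moreover have "6 * e * t^2 = t^2 * (6 * e)" by (simp only: mult.commute)
    ultimately have "t^2 * \<bar>Lj a - Li b\<bar> \<le> t^2 * (6 * e)"
      by linarith
    then show ?thesis using t(1) by simp
  qed
  note H = this
  have "\<bar>Lj a - Li b\<bar> \<le> 0 + e" if "e > 0" for e
  proof -
    have "\<bar>Lj a - Li b\<bar> \<le> 6 * (e / 6)" using H[of "e / 6"] that by simp
    then show ?thesis by simp
  qed
  then have "\<bar>Lj a - Li b\<bar> \<le> 0" by (rule field_le_epsilon)
  then have "Lj a = Li b" by simp
  then show ?thesis using goal by simp
qed

lemma curv_alg:
  fixes g :: "'n::finite \<Rightarrow> 'n \<Rightarrow> real" and C :: "'n \<Rightarrow> 'n \<Rightarrow> 'n \<Rightarrow> real"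
    and D P :: "'n \<Rightarrow> 'n \<Rightarrow> 'n \<Rightarrow> 'n \<Rightarrow> real"
  defines "T \<equiv> \<lambda>a b c. \<Sum>m\<in>UNIV. C m a b * g m c"
  defines "R \<equiv> \<lambda>l i j k. D i l j k - D j l i k + (\<Sum>m\<in>UNIV. C l i m * C m j k - C l j m * C m i k)"
  assumes sym: "\<And>a b. g a b = g b a"
    and E: "\<And>i j k l. P i j k l = (\<Sum>m\<in>UNIV. D i m j k * g m l + C m j k * (T i m l + T i l m))
                                  + (\<Sum>m\<in>UNIV. D i m j l * g m k + C m j l * (T i m k + T i k m))"
    and S: "\<And>i j k l. P i j k l = P j i k l"
  shows "(\<Sum>a\<in>UNIV. R a i j k * g a q) + (\<Sum>a\<in>UNIV. R a i j q * g a k) = 0"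
proof -
  define X where "X i j k l = (\<Sum>m\<in>UNIV. D i m j k * g m l) + (\<Sum>m\<in>UNIV. C m j k * T i m l)" for i j k l
  define Y where "Y i j k l = (\<Sum>m\<in>UNIV. C m j k * T i l m)" for i j k l
  have EXY: "P i j k l = X i j k l + Y i j k l + X i j l k + Y i j l k" for i j k l
    unfolding E X_def Y_def by (simp add: sum.distrib distrib_left)
  have RX: "(\<Sum>a\<in>UNIV. R a i j k * g a q) = X i j k q - X j i k q" for i j k q
  proof -
    have A: "(\<Sum>a\<in>UNIV. (\<Sum>m\<in>UNIV. C a i m * C m j k) * g a q) = (\<Sum>m\<in>UNIV. C m j k * T i m q)" for i j k q
      unfolding T_def sum_distrib_left sum_distrib_right
      by (subst sum.swap) (simp add: ac_simps)
    have "(\<Sum>a\<in>UNIV. R a i j k * g a q) =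
       (\<Sum>a\<in>UNIV. D i a j k * g a q) - (\<Sum>a\<in>UNIV. D j a i k * g a q)
       + (\<Sum>a\<in>UNIV. (\<Sum>m\<in>UNIV. C a i m * C m j k) * g a q)
       - (\<Sum>a\<in>UNIV. (\<Sum>m\<in>UNIV. C a j m * C m i k) * g a q)"
      unfolding R_def by (simp add: algebra_simps sum.distrib sum_subtractf)
    then show ?thesis unfolding A X_def by simp
  qed
  have YY: "Y i j k l = Y j i l k" for i j k l
    unfolding Y_def T_def sum_distrib_left
    by (subst sum.swap) (simp add: ac_simps sym)
  show ?thesis
    using EXY[of i j k q] EXY[of j i k q] S[of i j k q] RX[of i j k q] RX[of i j q k] YY[of i j k q] YY[of i j q k]
    by simp
qed

lemma mgmat_sym: "mgmat f y $ a $ b = mgmat f y $ b $ a"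
  unfolding mgmat_def vec_lambda_beta gmat_sym[of f y a b] ..

lemma mginv_delta:
  assumes "immersion_on U f" "umbilic_free U f" "y \<in> U"
  shows "(\<Sum>m\<in>UNIV. mginv f y $ m $ p * mgmat f y $ m $ l) = (if p = l then 1 else 0)"
proof -
  have "(mgmat f y ** mginv f y) $ l $ p = mat 1 $ l $ p"
    unfolding mginv_def using matrix_inv_props(1)[OF mgmat_det_nz[OF assms]] by simp
  then show ?thesis
    by (simp add: matrix_matrix_mult_def mat_def mgmat_sym[of f y l] mult.commute eq_commute[of l p])
qed

lemma T_formula:
  assumes "immersion_on U f" "umbilic_free U f" "y \<in> U"
  shows "(\<Sum>m\<in>UNIV. christ f m j k y * mgmat f y $ m $ l) =
    1/2 * (pd j (\<lambda>y. mgmat f y $ k $ l) y + pd k (\<lambda>y. mgmat f y $ j $ l) y - pd l (\<lambda>y. mgmat f y $ j $ k) y)"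
proof -
  define B where "B p = pd j (\<lambda>y. mgmat f y $ k $ p) y + pd k (\<lambda>y. mgmat f y $ j $ p) y - pd p (\<lambda>y. mgmat f y $ j $ k) y" for p
  have "(\<Sum>m\<in>UNIV. christ f m j k y * mgmat f y $ m $ l) =
        (\<Sum>m\<in>UNIV. \<Sum>p\<in>UNIV. 1/2 * B p * (mginv f y $ m $ p * mgmat f y $ m $ l))"
    unfolding christ_def B_def by (simp add: sum_distrib_left sum_distrib_right ac_simps)
  also have "\<dots> = (\<Sum>p\<in>UNIV. 1/2 * B p * (\<Sum>m\<in>UNIV. mginv f y $ m $ p * mgmat f y $ m $ l))"
    by (subst sum.swap) (simp add: sum_distrib_left)
  also have "\<dots> = 1/2 * B l"
    by (simp add: mginv_delta[OF assms] if_distrib cong: if_cong)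
  finally show ?thesis by (simp add: B_def)
qed

lemma pd_sum:
  fixes F :: "'s \<Rightarrow> real^'n::finite \<Rightarrow> 'b::real_normed_vector"
  assumes "finite S" "\<And>s. s \<in> S \<Longrightarrow> F s differentiable at x"
  shows "pd i (\<lambda>y. \<Sum>s\<in>S. F s y) x = (\<Sum>s\<in>S. pd i (F s) x)"
proof -
  have "((\<lambda>y. \<Sum>s\<in>S. F s y) has_derivative (\<lambda>h. \<Sum>s\<in>S. frechet_derivative (F s) (at x) h)) (at x)"
    by (rule has_derivative_sum) (use assms pd_has in auto)
  from pd_eq[OF this] show ?thesis unfolding pd_def by simp
qed

lemma curv_coord:
  assumes imm: "immersion_on U f" and uf: "umbilic_free U f" and x: "x \<in> U"
  shows "(\<Sum>a\<in>UNIV. riem f a i j k x * mgmat f x $ a $ q) + (\<Sum>a\<in>UNIV. riem f a i j q x * mgmat f x $ a $ k) = 0"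
proof -
  have U: "open U" using imm immersion_open by blast
  define g where "g a b = mgmat f x $ a $ b" for a b
  define C where "C m j k = christ f m j k x" for m j k
  define D where "D i m j k = pd i (christ f m j k) x" for i m j k
  define P where "P i j k l = pd i (pd j (\<lambda>y. mgmat f y $ k $ l)) x" for i j k l
  define TT where "TT j k l y = (\<Sum>m\<in>UNIV. christ f m j k y * mgmat f y $ m $ l)" for j k l y
  have smg: "sm U (\<lambda>y. mgmat f y $ a $ b)" for a b using sm_mgmat[OF imm uf] .
  have smc: "sm U (christ f m j k)" for m j k using sm_christ[OF imm uf] .
  have smT: "sm U (TT j k l)" for j k l
    unfolding TT_def by (intro sm_sum sm_mult smg smc U) auto
  have symf: "(\<lambda>y. mgmat f y $ a $ b) = (\<lambda>y. mgmat f y $ b $ a)" for a b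
    by (rule ext) (rule mgmat_sym)
  have F4: "pd j (\<lambda>y. mgmat f y $ k $ l) y = TT j k l y + TT j l k y" if "y \<in> U" for j k l y
    unfolding TT_def T_formula[OF imm uf that] using symf[of k l] symf[of j k] symf[of j l]
    by (simp add: algebra_simps)
  have dT: "TT j k l differentiable at x" for j k l using sm_diff_at[OF U smT x] .
  have F7: "pd i (\<lambda>y. mgmat f y $ m $ l) x = TT i m l x + TT i l m x" for i m l using F4[OF x] .
  have F5: "pd i (TT j k l) x = (\<Sum>m\<in>UNIV. D i m j k * g m l + C m j k * (TT i m l x + TT i l m x))" for i j k l
  proof -
    have "pd i (TT j k l) x = (\<Sum>m\<in>UNIV. pd i (\<lambda>y. christ f m j k y * mgmat f y $ m $ l) x)"
      unfolding TT_def
      by (rule pd_sum) (auto intro!: sm_diff_at[OF U _ x] sm_mult[OF U] smc smg)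
    also have "\<dots> = (\<Sum>m\<in>UNIV. D i m j k * g m l + C m j k * pd i (\<lambda>y. mgmat f y $ m $ l) x)"
      by (rule sum.cong[OF refl], subst pd_bilinear[OF bounded_bilinear_mult])
         (auto simp: D_def g_def C_def intro!: sm_diff_at[OF U _ x] smc smg)
    finally show ?thesis by (simp add: F7)
  qed
  have F6: "P i j k l = pd i (TT j k l) x + pd i (TT j l k) x" for i j k l
  proof -
    have "P i j k l = pd i (\<lambda>y. TT j k l y + TT j l k y) x"
      unfolding P_def by (rule pd_cong[OF U x]) (use F4 in auto)
    also have "\<dots> = pd i (TT j k l) x + pd i (TT j l k) x" by (rule pd_add[OF dT dT])
    finally show ?thesis .
  qed
  have S: "P i j k l = P j i k l" for i j k l
    unfolding P_def
    by (rule schwarz[OF U x sm_diff_on[OF smg] sm_diff_at[OF U sm_pd[OF smg] x] sm_diff_at[OF U sm_pd[OF smg] x]])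
  have TTg: "TT a b c x = (\<Sum>m\<in>UNIV. C m a b * g m c)" for a b c
    by (simp add: TT_def C_def g_def)
  have E: "P i j k l = (\<Sum>m\<in>UNIV. D i m j k * g m l + C m j k * ((\<lambda>a b c. \<Sum>m\<in>UNIV. C m a b * g m c) i m l + (\<lambda>a b c. \<Sum>m\<in>UNIV. C m a b * g m c) i l m))
                      + (\<Sum>m\<in>UNIV. D i m j l * g m k + C m j l * ((\<lambda>a b c. \<Sum>m\<in>UNIV. C m a b * g m c) i m k + (\<lambda>a b c. \<Sum>m\<in>UNIV. C m a b * g m c) i k m))" for i j k l
    unfolding F6 F5 TTg by simp
  have "(\<Sum>a\<in>UNIV. (\<lambda>l i j k. D i l j k - D j l i k + (\<Sum>m\<in>UNIV. C l i m * C m j k - C l j m * C m i k)) a i j k * g a q)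
      + (\<Sum>a\<in>UNIV. (\<lambda>l i j k. D i l j k - D j l i k + (\<Sum>m\<in>UNIV. C l i m * C m j k - C l j m * C m i k)) a i j q * g a k) = 0"
    by (rule curv_alg[where P=P, OF _ E S]) (simp add: g_def mgmat_sym)
  then show ?thesis by (simp add: riem_def C_def D_def g_def)
qed

lemma sum4_reorder:
  "(\<Sum>a\<in>A. \<Sum>i\<in>I. \<Sum>j\<in>J. \<Sum>k\<in>K. F a i j k) = (\<Sum>i\<in>I. \<Sum>j\<in>J. \<Sum>k\<in>K. \<Sum>a\<in>A. F a i j k)"
proof -
  have "(\<Sum>a\<in>A. \<Sum>i\<in>I. \<Sum>j\<in>J. \<Sum>k\<in>K. F a i j k) = (\<Sum>i\<in>I. \<Sum>a\<in>A. \<Sum>j\<in>J. \<Sum>k\<in>K. F a i j k)"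
    by (rule sum.swap)
  also have "\<dots> = (\<Sum>i\<in>I. \<Sum>j\<in>J. \<Sum>a\<in>A. \<Sum>k\<in>K. F a i j k)"
    by (rule sum.cong[OF refl], rule sum.swap)
  also have "\<dots> = (\<Sum>i\<in>I. \<Sum>j\<in>J. \<Sum>k\<in>K. \<Sum>a\<in>A. F a i j k)"
    by (rule sum.cong[OF refl], rule sum.cong[OF refl], rule sum.swap)
  finally show ?thesis .
qed

lemma mip_sym: "mip f x A B = mip f x B A"
  unfolding mip_def
  by (subst sum.swap) (simp add: mgmat_sym[of f x] ac_simps)

lemma mipc:
  "mip f x (mcurv f x X Y Z) W =
   (\<Sum>i\<in>UNIV. \<Sum>j\<in>UNIV. \<Sum>k\<in>UNIV. X$i * Y$j * Z$k *
      (\<Sum>b\<in>UNIV. W$b * (\<Sum>a\<in>UNIV. riem f a i j k x * mgmat f x $ a $ b)))"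
proof -
  define h where "h a = (\<Sum>b\<in>UNIV. W$b * mgmat f x $ a $ b)" for a
  have "mip f x (mcurv f x X Y Z) W = (\<Sum>a\<in>UNIV. (\<Sum>i\<in>UNIV. \<Sum>j\<in>UNIV. \<Sum>k\<in>UNIV. X$i * Y$j * Z$k * riem f a i j k x) * h a)"
  proof -
    have "mip f x A W = (\<Sum>a\<in>UNIV. A$a * h a)" for A
      unfolding mip_def h_def by (simp add: sum_distrib_left ac_simps)
    then show ?thesis by (simp add: mcurv_def)
  qed
  also have "\<dots> = (\<Sum>a\<in>UNIV. \<Sum>i\<in>UNIV. \<Sum>j\<in>UNIV. \<Sum>k\<in>UNIV. X$i * Y$j * Z$k * (riem f a i j k x * h a))"
    by (simp only: sum_distrib_right) (simp add: ac_simps)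
  also have "\<dots> = (\<Sum>i\<in>UNIV. \<Sum>j\<in>UNIV. \<Sum>k\<in>UNIV. \<Sum>a\<in>UNIV. X$i * Y$j * Z$k * (riem f a i j k x * h a))"
    by (rule sum4_reorder)
  also have "\<dots> = (\<Sum>i\<in>UNIV. \<Sum>j\<in>UNIV. \<Sum>k\<in>UNIV. X$i * Y$j * Z$k * (\<Sum>a\<in>UNIV. riem f a i j k x * h a))"
    by (simp add: sum_distrib_left)
  also have "\<dots> = (\<Sum>i\<in>UNIV. \<Sum>j\<in>UNIV. \<Sum>k\<in>UNIV. X$i * Y$j * Z$k *
      (\<Sum>b\<in>UNIV. W$b * (\<Sum>a\<in>UNIV. riem f a i j k x * mgmat f x $ a $ b)))"
  proof -
    have "(\<Sum>a\<in>UNIV. riem f a i j k x * h a) = (\<Sum>b\<in>UNIV. W$b * (\<Sum>a\<in>UNIV. riem f a i j k x * mgmat f x $ a $ b))" for i j k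
      unfolding h_def sum_distrib_left
      by (subst sum.swap) (simp add: ac_simps)
    then show ?thesis by simp
  qed
  finally show ?thesis .
qed

lemma antisym_alg:
  fixes Q :: "'n::finite \<Rightarrow> 'n \<Rightarrow> 'n \<Rightarrow> 'n \<Rightarrow> real"
  assumes "\<And>i j k b. Q i j k b + Q i j b k = 0"
  shows "(\<Sum>i\<in>UNIV. \<Sum>j\<in>UNIV. \<Sum>k\<in>UNIV. X i * Y j * Z k * (\<Sum>b\<in>UNIV. W b * Q i j k b)) +
         (\<Sum>i\<in>UNIV. \<Sum>j\<in>UNIV. \<Sum>k\<in>UNIV. X i * Y j * W k * (\<Sum>b\<in>UNIV. Z b * Q i j k b)) = 0"
proof -
  have inner: "(\<Sum>k\<in>UNIV. Z k * (\<Sum>b\<in>UNIV. W b * Q i j k b)) + (\<Sum>k\<in>UNIV. W k * (\<Sum>b\<in>UNIV. Z b * Q i j k b)) = 0" for i j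
  proof -
    have "(\<Sum>k\<in>UNIV. W k * (\<Sum>b\<in>UNIV. Z b * Q i j k b)) = (\<Sum>k\<in>UNIV. \<Sum>b\<in>UNIV. Z b * W k * Q i j k b)"
      by (simp add: sum_distrib_left ac_simps)
    also have "\<dots> = (\<Sum>b\<in>UNIV. \<Sum>k\<in>UNIV. Z b * W k * Q i j k b)" by (rule sum.swap)
    finally have 1: "(\<Sum>k\<in>UNIV. W k * (\<Sum>b\<in>UNIV. Z b * Q i j k b)) = (\<Sum>k\<in>UNIV. \<Sum>b\<in>UNIV. Z k * W b * Q i j b k)" .
    have 2: "(\<Sum>k\<in>UNIV. Z k * (\<Sum>b\<in>UNIV. W b * Q i j k b)) = (\<Sum>k\<in>UNIV. \<Sum>b\<in>UNIV. Z k * W b * Q i j k b)"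
      by (simp add: sum_distrib_left ac_simps)
    have "(\<Sum>k\<in>UNIV. \<Sum>b\<in>UNIV. Z k * W b * Q i j k b) + (\<Sum>k\<in>UNIV. \<Sum>b\<in>UNIV. Z k * W b * Q i j b k)
        = (\<Sum>k\<in>UNIV. \<Sum>b\<in>UNIV. Z k * W b * (Q i j k b + Q i j b k))"
      by (simp add: sum.distrib distrib_left)
    also have "\<dots> = 0" using assms by simp
    finally show ?thesis using 1 2 by simp
  qed
  have "(\<Sum>i\<in>UNIV. \<Sum>j\<in>UNIV. \<Sum>k\<in>UNIV. X i * Y j * Z k * (\<Sum>b\<in>UNIV. W b * Q i j k b)) +
         (\<Sum>i\<in>UNIV. \<Sum>j\<in>UNIV. \<Sum>k\<in>UNIV. X i * Y j * W k * (\<Sum>b\<in>UNIV. Z b * Q i j k b))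
      = (\<Sum>i\<in>UNIV. \<Sum>j\<in>UNIV. X i * Y j * ((\<Sum>k\<in>UNIV. Z k * (\<Sum>b\<in>UNIV. W b * Q i j k b)) + (\<Sum>k\<in>UNIV. W k * (\<Sum>b\<in>UNIV. Z b * Q i j k b))))"
    by (simp add: sum.distrib distrib_left sum_distrib_left ac_simps)
  also have "\<dots> = 0" using inner by simp
  finally show ?thesis .
qed

lemma mcurv_antisym:
  assumes "immersion_on U f" "umbilic_free U f" "x \<in> U"
  shows "mip f x (mcurv f x X Y Z) W + mip f x Z (mcurv f x X Y W) = 0"
proof -
  define Q where "Q i j k b = (\<Sum>a\<in>UNIV. riem f a i j k x * mgmat f x $ a $ b)" for i j k b
  have "Q i j k b + Q i j b k = 0" for i j k b
    unfolding Q_def using curv_coord[OF assms] .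
  from antisym_alg[of Q, OF this, of "\<lambda>i. X$i" "\<lambda>j. Y$j" "\<lambda>k. Z$k" "\<lambda>b. W$b"]
  show ?thesis
    unfolding mip_sym[of f x Z] mipc Q_def .
qed

lemma tproj_linear: "linear (tproj f y)"
  unfolding tproj_def
  by (rule linearI) (auto simp: inner_add_left sum.distrib scaleR_add_left distrib_left scaleR_sum_right ac_simps)

lemma ginv_props:
  assumes "immersion_on U f" "y \<in> U"
  shows "(\<Sum>i\<in>UNIV. gmat f y $ b $ i * ginv f y $ i $ j) = (if b = j then 1 else 0)"
proof -
  have "(gmat f y ** ginv f y) $ b $ j = mat 1 $ b $ j"
    unfolding ginv_def using matrix_inv_props(1)[OF gmat_det_nz[OF assms]] by simp
  then show ?thesis by (simp add: matrix_matrix_mult_def mat_def)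
qed

lemma tproj_idem:
  assumes "immersion_on U f" "y \<in> U"
  shows "tproj f y (tproj f y v) = tproj f y v"
proof -
  have "inner (tproj f y v) (pd b f y) = inner v (pd b f y)" for b
  proof -
    have "inner (tproj f y v) (pd b f y) =
      (\<Sum>i\<in>UNIV. \<Sum>j\<in>UNIV. ginv f y $ i $ j * inner v (pd j f y) * gmat f y $ b $ i)"
      unfolding tproj_def gmat_def inner_sum_left inner_scaleR_left
      by (simp add: inner_commute[of "pd b f y"])
    also have "\<dots> = (\<Sum>j\<in>UNIV. (\<Sum>i\<in>UNIV. gmat f y $ b $ i * ginv f y $ i $ j) * inner v (pd j f y))"
      by (subst sum.swap) (simp add: sum_distrib_right sum_distrib_left ac_simps)
    also have "\<dots> = inner v (pd b f y)"
    proof -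
      have "(if b = j then 1 else 0) * c = (if b = j then c else 0)" for j and c :: real by simp
      then show ?thesis by (simp add: ginv_props[OF assms])
    qed
    finally show ?thesis .
  qed
  then show ?thesis unfolding tproj_def[of f y "tproj f y v"] by (simp add: tproj_def[of f y v])
qed

definition Nsp where "Nsp f y = {v. tproj f y v = 0}"

lemma Nsp_subspace: "subspace (Nsp f y)"
  unfolding Nsp_def by (rule linear_subspace_kernel[OF tproj_linear])

lemma nproj_in:
  assumes "immersion_on U f" "y \<in> U"
  shows "nproj f y w \<in> Nsp f y"
  unfolding Nsp_def nproj_def using tproj_idem[OF assms, of w] linear_diff[OF tproj_linear, of f y w "tproj f y w"] by simp

lemma Nsp_fix: "v \<in> Nsp f y \<Longrightarrow> nproj f y v = v"
  unfolding Nsp_def nproj_def by simp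

lemma sff_N: "immersion_on U f \<Longrightarrow> y \<in> U \<Longrightarrow> sff f y Z W \<in> Nsp f y"
  unfolding sff_def by (rule nproj_in)

lemma meanc_N: "immersion_on U f \<Longrightarrow> y \<in> U \<Longrightarrow> meanc f y \<in> Nsp f y"
  unfolding meanc_def
  by (intro subspace_scale[OF Nsp_subspace] subspace_sum[OF Nsp_subspace] sff_N)

lemma mbeta_N: "immersion_on U f \<Longrightarrow> y \<in> U \<Longrightarrow> mbeta f y Z W \<in> Nsp f y"
  unfolding mbeta_def
  by (intro subspace_scale[OF Nsp_subspace] subspace_diff[OF Nsp_subspace] sff_N meanc_N)

lemma rperp_mbeta_zero:
  assumes "immersion_on U f" "umbilic_free U f" "flat_normal_bundle U f" "x \<in> U"
  shows "rperp f x X Y (\<lambda>y. mbeta f y Z W) = 0"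
proof -
  have "smooth_on U (\<lambda>y. mbeta f y Z W)" unfolding smooth_on_sm using sm_mbeta[OF assms(1,2)] .
  moreover have "\<forall>y\<in>U. nproj f y (mbeta f y Z W) = mbeta f y Z W"
    using Nsp_fix mbeta_N[OF assms(1)] by blast
  ultimately show ?thesis using assms(3,4) unfolding flat_normal_bundle_def by blast
qed

lemma semi_par_reduced:
  assumes "immersion_on U f" "umbilic_free U f" "flat_normal_bundle U f" "semi_parallel_moebius U f" "x \<in> U"
  shows "mbeta f x (mcurv f x X Y Z) W + mbeta f x Z (mcurv f x X Y W) = 0"
proof -
  have "rperp f x X Y (\<lambda>y. mbeta f y Z W) - mbeta f x (mcurv f x X Y Z) W - mbeta f x Z (mcurv f x X Y W) = 0"
    using assms(4,5) unfolding semi_parallel_moebius_def by blast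
  moreover have h: "(0::real^'m) - a - b = - (a + b)" for a b by (simp add: algebra_simps)
  ultimately have "- (mbeta f x (mcurv f x X Y Z) W + mbeta f x Z (mcurv f x X Y W)) = 0"
    unfolding rperp_mbeta_zero[OF assms(1,2,3,5), of X Y Z W] by simp
  then show ?thesis by (metis neg_equal_0_iff_equal)
qed

lemma ip_linear_left: "linear (\<lambda>A. ip f x A C)"
  unfolding ip_Pv by (rule linearI) (simp_all add: Pv_add Pv_scale inner_add_left)

lemma ip_linear_right: "linear (\<lambda>C. ip f x A C)"
  unfolding ip_Pv by (rule linearI) (simp_all add: Pv_add Pv_scale inner_add_right)

lemma mcurv_linear: "linear (mcurv f x X Y)"
  by (rule linearI) (simp_all add: mcurv_def vec_eq_iff algebra_simps sum.distrib sum_distrib_left)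

lemma mip_ip: "mip f x A B = (rho f x)^2 * ip f x A B"
  unfolding mip_def ip_def mgmat_def by (simp add: sum_distrib_left ac_simps)

lemma nproj_linear: "linear (nproj f y)"
  unfolding nproj_def by (rule linear_compose_sub[OF linear_ident tproj_linear, unfolded id_def])

lemma sff_linear_left: "linear (\<lambda>Z. sff f x Z W)"
proof -
  have "linear (\<lambda>Z. \<Sum>i\<in>UNIV. \<Sum>j\<in>UNIV. (Z$i * W$j) *\<^sub>R pd i (pd j f) x)"
    by (rule linearI) (simp_all add: algebra_simps sum.distrib scaleR_sum_right scaleR_add_left)
  from linear_compose[OF this nproj_linear] show ?thesis unfolding sff_def o_def .
qed

lemma span_all:
  fixes e :: "'n::finite \<Rightarrow> real^'n"
  assumes imm: "immersion_on U f" and x: "x \<in> U"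
    and nz: "\<And>i. e i \<noteq> 0" and orth: "\<And>i j. i \<noteq> j \<Longrightarrow> ip f x (e i) (e j) = 0"
  shows "span (range e) = UNIV"
proof -
  have pos: "ip f x (e i) (e i) > 0" for i using ip_pos[OF imm x nz] .
  have inj: "inj e"
  proof (rule injI)
    fix i j assume "e i = e j"
    then show "i = j" using orth[of i j] pos[of i] by (metis less_irrefl)
  qed
  have lin: "ip f x (\<Sum>v\<in>S. u v *\<^sub>R v) w = (\<Sum>v\<in>S. u v * ip f x v w)" for S u w
    using linear_sum[OF ip_linear_left[of f x w], of "\<lambda>v. u v *\<^sub>R v" S]
      linear_scale[OF ip_linear_left[of f x w]] by (simp add: o_def)
  have indep: "independent (range e)"
  proof -
    have "\<not> (\<exists>u. (\<exists>v\<in>range e. u v \<noteq> 0) \<and> (\<Sum>v\<in>range e. u v *\<^sub>R v) = 0)"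
    proof
      assume "\<exists>u. (\<exists>v\<in>range e. u v \<noteq> 0) \<and> (\<Sum>v\<in>range e. u v *\<^sub>R v) = 0"
      then obtain u k where uk: "u (e k) \<noteq> 0" "(\<Sum>v\<in>range e. u v *\<^sub>R v) = 0" by blast
      have "0 = ip f x (\<Sum>v\<in>range e. u v *\<^sub>R v) (e k)" using uk(2) linear_0[OF ip_linear_left] by simp
      also have "\<dots> = (\<Sum>v\<in>range e. u v * ip f x v (e k))" by (rule lin)
      also have "\<dots> = u (e k) * ip f x (e k) (e k)"
      proof -
        have "(\<Sum>v\<in>range e. u v * ip f x v (e k)) = u (e k) * ip f x (e k) (e k) + (\<Sum>v\<in>range e - {e k}. u v * ip f x v (e k))"
          by (rule sum.remove) auto
        moreover have "(\<Sum>v\<in>range e - {e k}. u v * ip f x v (e k)) = 0"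
          using orth by (intro sum.neutral) (metis DiffE image_iff insertI1 mult_zero_right)
        ultimately show ?thesis by simp
      qed
      finally show False using uk(1) pos[of k] by simp
    qed
    then show ?thesis using real_vector.dependent_finite[of "range e"] by simp
  qed
  have card: "card (range e) = CARD('n)" using card_image[OF inj] by simp
  have "UNIV \<subseteq> span (range e)"
    by (rule card_ge_dim_independent[OF _ indep]) (simp_all add: card)
  then show ?thesis by blast
qed

theorem theorem2:
  fixes U :: "(real^'n::finite) set" and f :: "real^'n \<Rightarrow> real^'m::finite"
  assumes "CARD('n) \<ge> 2"
    and "CARD('m) \<ge> CARD('n) + 2"
    and "immersion_on U f"
    and "umbilic_free U f"
    and "flat_normal_bundle U f"
    and "semi_parallel_moebius U f"
    and "n_distinct_principal_normals U f"
  shows "\<forall>x\<in>U. \<forall>X Y. independent {X, Y} \<and> X \<noteq> Y \<longrightarrow> msec f x X Y = 0"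
proof -
  obtain eta :: "'n \<Rightarrow> real^'n \<Rightarrow> real^'m" where
    "(\<forall>i. smooth_on U (eta i))" and eta_d: "\<forall>x\<in>U. \<forall>i j. i \<noteq> j \<longrightarrow> eta i x \<noteq> eta j x" and
    eta_e: "\<forall>x\<in>U. \<exists>e :: 'n \<Rightarrow> real^'n.
           (\<forall>i. e i \<noteq> 0) \<and> (\<forall>i j. i \<noteq> j \<longrightarrow> ip f x (e i) (e j) = 0) \<and>
           (\<forall>i Y. sff f x (e i) Y = ip f x (e i) Y *\<^sub>R eta i x)"
    using assms(7) unfolding n_distinct_principal_normals_def by (elim exE conjE)
  note imm = assms(3) and uf = assms(4)
  show ?thesis
  proof (intro ballI allI impI)
  fix x X Y assume x: "x \<in> U"
  obtain e :: "'n \<Rightarrow> real^'n" where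
    nz: "\<And>i. e i \<noteq> 0" and orth: "\<And>i j. i \<noteq> j \<Longrightarrow> ip f x (e i) (e j) = 0" and
    pn: "\<And>i Y. sff f x (e i) Y = ip f x (e i) Y *\<^sub>R eta i x"
    using eta_e x by (meson)
  have sp: "span (range e) = UNIV" using span_all[OF imm x nz orth] .
  define L where "L = mcurv f x X Y"
  have Llin: "linear L" unfolding L_def by (rule mcurv_linear)
  have rho0: "rho f x \<noteq> 0" using uf x by (auto simp: umbilic_free_def)
  define H where "H = meanc f x"
  have sffj: "sff f x Z (e j) = ip f x Z (e j) *\<^sub>R eta j x" for Z j
  proof -
    have lin: "linear (\<lambda>Z. sff f x Z (e j) - ip f x Z (e j) *\<^sub>R eta j x)"
      by (intro linearI) (simp_all add: linear_add[OF sff_linear_left] linear_scale[OF sff_linear_left]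
        linear_add[OF ip_linear_left] linear_scale[OF ip_linear_left] algebra_simps)
    have mem: "Z \<in> span (range e)" using sp by simp
    have sub: "subspace (Collect (\<lambda>Z. sff f x Z (e j) - ip f x Z (e j) *\<^sub>R eta j x = 0))"
      using linear_subspace_kernel[OF lin] by simp
    have base: "sff f x Z (e j) - ip f x Z (e j) *\<^sub>R eta j x = 0" if Zr: "Z \<in> range e" for Z
    proof -
      obtain i where "Z = e i" using Zr by blast
      then show ?thesis using pn[of i "e j"] orth[of i j] by (cases "i = j") auto
    qed
    have "sff f x Z (e j) - ip f x Z (e j) *\<^sub>R eta j x = 0"
      by (rule real_vector.span_induct[OF mem sub base])
    then show ?thesis by simp
  qed
  have mb: "mbeta f x Z W = rho f x *\<^sub>R (sff f x Z W - ip f x Z W *\<^sub>R H)" for Z W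
    by (simp add: mbeta_def H_def)
  have a0: "ip f x (e k) (L (e j)) = 0" for k j
  proof -
    define a where "a = ip f x (e k) (L (e j))"
    have "mip f x (L (e k)) (e j) + mip f x (e k) (L (e j)) = 0"
      unfolding L_def by (rule mcurv_antisym[OF imm uf x])
    then have "(rho f x)^2 * (ip f x (L (e k)) (e j) + a) = 0"
      unfolding mip_ip a_def by (simp add: algebra_simps)
    then have anti: "ip f x (L (e k)) (e j) = - a" using rho0 by simp
    show ?thesis
    proof (cases "k = j")
      case True
      then have "ip f x (L (e k)) (e j) = a" unfolding a_def using ip_sym by metis
      then show ?thesis using anti unfolding a_def by simp
    next
      case False
      have "mbeta f x (L (e k)) (e j) + mbeta f x (e k) (L (e j)) = 0"
        unfolding L_def by (rule semi_par_reduced[OF imm uf assms(5,6) x])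
      then have "rho f x *\<^sub>R (((- a) *\<^sub>R eta j x - (- a) *\<^sub>R H) + (a *\<^sub>R eta k x - a *\<^sub>R H)) = 0"
        unfolding mb sffj pn anti a_def[symmetric] by (simp add: algebra_simps)
      then have "(rho f x * a) *\<^sub>R (eta k x - eta j x) = 0"
        by (simp add: algebra_simps)
      moreover have "eta k x - eta j x \<noteq> 0" using eta_d x False by auto
      ultimately show ?thesis using rho0 unfolding a_def by simp
    qed
  qed
  have all0: "ip f x X' (L Y') = 0" for X' Y'
  proof -
    have mem1: "X' \<in> span (range e)" using sp by simp
    have sub1: "subspace (Collect (\<lambda>A. \<forall>j. ip f x A (L (e j)) = 0))"
    proof -
      have "subspace {A. ip f x A (L (e j)) = 0}" for j
        using linear_subspace_kernel[OF ip_linear_left[of f x "L (e j)"]] by simp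
      then show ?thesis unfolding subspace_def by auto
    qed
    have base1: "\<forall>j. ip f x A (L (e j)) = 0" if "A \<in> range e" for A
      using that a0 by auto
    have h1: "\<forall>j. ip f x X' (L (e j)) = 0"
      by (rule real_vector.span_induct[OF mem1 sub1 base1])
    have mem2: "Y' \<in> span (range e)" using sp by simp
    have "linear (\<lambda>B. ip f x X' (L B))"
      using linear_compose[OF Llin ip_linear_right] by (simp add: o_def)
    from linear_subspace_kernel[OF this] have sub2: "subspace (Collect (\<lambda>B. ip f x X' (L B) = 0))"
      by simp
    have base2: "ip f x X' (L B) = 0" if "B \<in> range e" for B
      using that h1 by auto
    show ?thesis
      by (rule real_vector.span_induct[OF mem2 sub2 base2])
  qed
  have "mip f x (mcurv f x X Y Y) X = 0"
    using all0[of X Y] unfolding mip_ip L_def ip_sym[of f x "mcurv f x X Y Y" X] by simp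
  then show "msec f x X Y = 0" unfolding msec_def by simp
  qed
qed

end
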